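(* Let $x,y,z\in\mathbb{C}^*$ with $x^N+y^N=z^N$. Then for all $k,l\in\mathbb{Z}$ (whenever both sides are defined), $$\omega(x,y,z\,|\,k-l)=\frac{\omega^{kl}\,\omega^{-\frac{l^2}{2}-\frac{k^2}{2}}}{\omega\big(z,\,-\omega^{1/2}y,\,\omega x\,\big|\,l-k\big)}.$$
   Context: $N\ge3$ odd, $N=2P+1$, $\omega=e^{2\pi i/N}$; for integers $r$, $\omega^{r/2}:=(\omega^{P+1})^r$ (so $\omega^{1/2}=\omega^{P+1}=-e^{i\pi/N}$). For $x,y,z\in\mathbb{C}^*$ with $x^N+y^N=z^N$ and $n\in\{0,\dots,N-1\}$, $\omega(x,y,z|n)=\prod_{j=1}^n\frac{y}{z-x\omega^j}$; since the product over $j=1,\dots,N$ equals $1$, this is extended $N$-periodically to $n\in\mathbb{Z}$. (Note $z^N+(-\omega^{1/2}y)^N=(\omega x)^N$.) *)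

theory Defs
  imports "HOL-Analysis.Analysis"
begin

definition root_N :: "nat \<Rightarrow> complex" where
  "root_N N = exp (2 * of_real pi * \<i> / of_nat N)"

text \<open>Half-integer powers: omega^(r/2) := (omega^(P+1))^r for N = 2P+1, r integer.\<close>
definition half_pow :: "nat \<Rightarrow> int \<Rightarrow> complex" where
  "half_pow N r = (root_N N ^ (N div 2 + 1)) powi r"

text \<open>omega(x,y,z|n) = prod_{j=1}^{n mod N} y/(z - x omega^j), the N-periodic extension
  of the product defined for n in {0..N-1}.\<close>
definition fermat_omega :: "nat \<Rightarrow> complex \<Rightarrow> complex \<Rightarrow> complex \<Rightarrow> int \<Rightarrow> complex" where
  "fermat_omega N x y z n =
     (\<Prod>j\<in>{1..nat (n mod int N)}. y / (z - x * root_N N ^ j))"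

end

theory Submission
  imports Defs "HOL-Computational_Algebra.Polynomial"
begin


lemma rootN_pow: assumes "N \<ge> 1" shows "root_N N ^ j = exp (2 * of_real pi * \<i> * of_nat j / of_nat N)"
  unfolding root_N_def by (metis exp_of_nat_mult times_divide_eq_right mult.commute)

lemma rootN_N: assumes "N \<ge> 1" shows "root_N N ^ N = 1"
  using complex_root_unity[of N N] assms by (simp add: rootN_pow)

lemma rootN_nz: "root_N N \<noteq> 0" unfolding root_N_def by simp

lemma rootN_inj: assumes "N \<ge> 1" shows "inj_on (\<lambda>i. root_N N ^ i) {1..N}"
proof (rule inj_onI)
  fix i j assume i: "i \<in> {1..N}" and j: "j \<in> {1..N}" and e: "root_N N ^ i = root_N N ^ j"
  hence "i mod N = j mod N" using complex_root_unity_eq[OF assms, of i j] by (simp add: rootN_pow[OF assms])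
  thus "i = j" using i j
    by (metis atLeastAtMost_iff le_eq_less_or_eq mod_less mod_self not_one_le_zero nat_less_le
         bot_nat_0.not_eq_extremum mod_less_eq_dividend zero_less_one_class.zero_le_one)
qed

lemma prod_poly: assumes "N \<ge> 1"
  shows "(\<Prod>i\<in>{1..N}. t - root_N N ^ i) = t ^ N - 1"
proof -
  define p where "p = (\<Prod>i\<in>{1..N}. [:- (root_N N ^ i), 1:])"
  define q :: "complex poly" where "q = monom 1 N - 1"
  have "p = q"
  proof (rule poly_eqI_degree_lead_coeff[where n = N and A = "(\<lambda>i. root_N N ^ i) ` {1..N}"])
    have dp: "degree p = N" unfolding p_def by (subst degree_prod_sum_eq) auto
    have "lead_coeff p = 1" unfolding p_def by (simp add: lead_coeff_prod)
    thus "poly.coeff p N = poly.coeff q N" using dp assms by (simp add: q_def)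
    show "card ((\<lambda>i. root_N N ^ i) ` {1..N}) \<ge> N" using card_image[OF rootN_inj[OF assms]] by simp
    show "degree p \<le> N" using dp by simp
    show "degree q \<le> N" unfolding q_def by (intro degree_diff_le) (auto simp: degree_monom_le)
    show "poly p z = poly q z" if "z \<in> (\<lambda>i. root_N N ^ i) ` {1..N}" for z
    proof -
      from that obtain i where i: "i \<in> {1..N}" "z = root_N N ^ i" by auto
      have "poly p z = 0" unfolding p_def poly_prod using i by (intro prod_zero) auto
      moreover have "poly q z = 0" unfolding q_def using i
        by (simp add: poly_monom power_mult[symmetric] mult.commute power_mult rootN_N[OF assms])
      ultimately show ?thesis by simp
    qed
  qed
  hence "poly p t = poly q t" by simp
  thus ?thesis unfolding p_def q_def by (simp add: poly_prod poly_monom)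
qed


lemma odd_dvd2: assumes "odd (N::nat)" "int N dvd 2 * d" shows "int N dvd d"
proof -
  have "coprime (int N) 2" using assms(1) by simp
  thus ?thesis using assms(2) coprime_dvd_mult_right_iff[of "int N" 2 d] by simp
qed

lemma powi_mod: assumes "N \<ge> 1" "a mod int N = b mod int N"
  shows "root_N N powi a = root_N N powi b"
proof -
  have *: "root_N N powi c = root_N N powi (c mod int N)" for c
  proof -
    have "root_N N powi c = root_N N powi (int N * (c div int N) + c mod int N)" by simp
    also have "\<dots> = root_N N powi (int N * (c div int N)) * root_N N powi (c mod int N)"
      using rootN_nz by (rule power_int_add[OF disjI1])
    also have "root_N N powi (int N * (c div int N)) = (root_N N ^ N) powi (c div int N)"
      by (simp only: power_int_power)
    finally show ?thesis using rootN_N[OF assms(1)] by simp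
  qed
  show ?thesis using *[of a] *[of b] assms(2) by simp
qed

lemma gauss2: "m \<le> N \<Longrightarrow> 2 * int (\<Sum>j\<in>{1..m}. N - j) = 2 * int m * int N - int m * (int m + 1)"
proof (induction m)
  case 0 then show ?case by simp
next
  case (Suc m)
  have "(\<Sum>j\<in>{1..Suc m}. N - j) = (\<Sum>j\<in>{1..m}. N - j) + (N - Suc m)" by simp
  hence "2 * int (\<Sum>j\<in>{1..Suc m}. N - j) = 2 * int (\<Sum>j\<in>{1..m}. N - j) + 2 * (int N - int (Suc m))"
    using Suc.prems by simp
  also have "\<dots> = 2 * int (Suc m) * int N - int (Suc m) * (int (Suc m) + 1)"
    using Suc by (simp add: algebra_simps)
  finally show ?case .
qed


lemma powi3: "(w::complex) \<noteq> 0 \<Longrightarrow> w powi (a + b + c) = w powi a * w powi b * w powi c"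
  by (simp add: power_int_add)

lemma alg1:
  fixes S m N n k l t P :: int
  assumes "N = 2 * P + 1" "2 * S = 2 * m * N - m * (m + 1)" "m = N - n" "k = l + n + N * t"
  shows "2 * (((P + 1) * m + S) - (k * l + (P + 1) * (- (l ^ 2)) + (P + 1) * (- (k ^ 2))))
    = N * (2 * N - n + 2 * n * t + N * t ^ 2 + k ^ 2 + l ^ 2)"
  using assms by algebra

theorem lemma6p2:
  fixes N P :: nat and x y z :: complex and k l :: int
  assumes "N = 2 * P + 1" and "N \<ge> 3"
    and "x \<noteq> 0" and "y \<noteq> 0" and "z \<noteq> 0"
    and "x ^ N + y ^ N = z ^ N"
  shows "fermat_omega N x y z (k - l) =
    (root_N N powi (k * l) * half_pow N (- (l ^ 2)) * half_pow N (- (k ^ 2)))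
    / fermat_omega N z (- half_pow N 1 * y) (root_N N * x) (l - k)"
proof -
  define w where "w = root_N N"
  define h where "h = w ^ (P + 1)"
  have N1: "N \<ge> 1" using assms by simp
  have wN: "w ^ N = 1" unfolding w_def using rootN_N[OF N1] .
  have w0: "w \<noteq> 0" unfolding w_def using rootN_nz .
  have hp: "half_pow N r = w powi ((int P + 1) * r)" for r
  proof -
    have e: "N div 2 + 1 = P + 1" using assms(1) by simp
    have "half_pow N r = (w ^ (P + 1)) powi r" unfolding half_pow_def w_def e ..
    also have "\<dots> = w powi (int (P + 1) * r)" by (rule power_int_power)
    finally show ?thesis by (simp add: add.commute)
  qed
  define F where "F i = y / (z - x * w ^ i)" for i :: nat
  have D0: "z - x * w ^ i \<noteq> 0" for i
  proof
    assume "z - x * w ^ i = 0"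
    hence "z ^ N = x ^ N * (w ^ N) ^ i" by (simp add: power_mult_distrib power_mult[symmetric] mult.commute)
    hence "z ^ N = x ^ N" using wN by simp
    thus False using assms(4,6) by simp
  qed
  have F0: "F i \<noteq> 0" for i unfolding F_def using D0 assms(4) by simp
  have full: "(\<Prod>i\<in>{1..N}. F i) = 1"
  proof -
    have "(\<Prod>i\<in>{1..N}. z - x * w ^ i) = (\<Prod>i\<in>{1..N}. x * (z / x - w ^ i))"
      using assms(3) by (intro prod.cong) (auto simp: field_simps)
    also have "\<dots> = x ^ N * (\<Prod>i\<in>{1..N}. z / x - w ^ i)" by (simp add: prod.distrib)
    also have "\<dots> = x ^ N * ((z / x) ^ N - 1)" unfolding w_def using prod_poly[OF N1] by simp
    also have "\<dots> = z ^ N - x ^ N" using assms(3) by (simp add: power_divide field_simps)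
    also have "\<dots> = y ^ N" using assms(6)[symmetric] by simp
    finally have "(\<Prod>i\<in>{1..N}. z - x * w ^ i) = y ^ N" .
    thus ?thesis unfolding F_def using assms(4) by (simp add: prod_dividef)
  qed
  define n where "n = nat ((k - l) mod int N)"
  have nlt: "n < N" unfolding n_def using N1 by (simp add: nat_less_iff)
  have lhs: "fermat_omega N x y z (k - l) = (\<Prod>i\<in>{1..n}. F i)"
    unfolding fermat_omega_def n_def F_def w_def ..
  define t where "t = (k - l) div int N"
  have kl: "k = l + int n + int N * t" unfolding t_def n_def using N1
    by (simp add: algebra_simps)
  have odd: "odd N" using assms(1) by simp
  show ?thesis
  proof (cases "n = 0")
    case True
    have m0: "nat ((l - k) mod int N) = 0"
    proof -
      have "(k - l) mod int N = 0" using True n_def N1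
        by (metis nat_eq_iff2 of_nat_0 pos_mod_sign of_nat_0_less_iff linorder_not_le less_le_trans zero_less_one le_less)
      hence "(l - k) mod int N = 0" by (metis dvd_minus_iff minus_diff_eq mod_eq_0_iff_dvd)
      thus ?thesis by simp
    qed
    have rhs0: "fermat_omega N z (- half_pow N 1 * y) (root_N N * x) (l - k) = 1"
      unfolding fermat_omega_def m0 by simp
    define E2 where "E2 = k * l + (int P + 1) * (- (l ^ 2)) + (int P + 1) * (- (k ^ 2))"
    have "2 * E2 = int N * (- (int N * t ^ 2 + k ^ 2 + l ^ 2))"
      unfolding E2_def using kl True assms(1) by (simp add: algebra_simps power2_eq_square)
    hence "int N dvd E2" using odd_dvd2[OF odd, of E2] by simp
    hence "E2 mod int N = 0 mod int N" by simp
    hence "w powi E2 = w powi 0" unfolding w_def by (rule powi_mod[OF N1])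
    moreover have "w powi E2 = w powi (k*l) * w powi ((int P+1) * (-(l^2))) * w powi ((int P+1)*(-(k^2)))"
      unfolding E2_def by (rule powi3[OF w0])
    ultimately have num: "root_N N powi (k * l) * half_pow N (- (l ^ 2)) * half_pow N (- (k ^ 2)) = 1"
      unfolding hp w_def by simp
    show ?thesis unfolding lhs rhs0 num using True by simp
  next
    case False
    define m where "m = N - n"
    have mdef: "nat ((l - k) mod int N) = m"
    proof -
      have "(k - l) mod int N \<noteq> 0" using False n_def by auto
      hence "(l - k) mod int N = int N - (k - l) mod int N"
        using zmod_zminus1_eq_if[of "k - l" "int N"] by simp
      moreover have "0 \<le> (k - l) mod int N" using N1 by simp
      ultimately show ?thesis unfolding m_def n_def using N1 nlt n_def by (simp add: nat_diff_distrib')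
    qed
    have G: "- half_pow N 1 * y / (w * x - z * w ^ j) = (h * w ^ (N - j)) * F (N + 1 - j)"
      if "j \<in> {1..N}" for j
    proof -
      have e1: "w ^ j * w ^ (N - j) = 1" using that wN by (simp add: power_add[symmetric])
      have e2: "w ^ j * w ^ (N + 1 - j) = w" using that wN by (simp add: power_add[symmetric])
      have hh: "half_pow N 1 = h" unfolding half_pow_def h_def w_def using assms(1) by simp
      have eq: "w * x - z * w ^ j = - (w ^ j) * (z - x * w ^ (N + 1 - j))"
        using e2 by (simp add: algebra_simps)
      have wj: "w ^ j \<noteq> 0" using w0 by simp
      have wi: "w ^ (N - j) = 1 / w ^ j" using e1 wj by (simp add: eq_divide_eq mult.commute)
      show ?thesis unfolding F_def hh eq wi using D0[of "N + 1 - j"] wj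
        by (simp add: field_simps)
    qed
    define S where "S = (\<Sum>j\<in>{1..m}. N - j)"
    have den: "fermat_omega N z (- half_pow N 1 * y) (root_N N * x) (l - k)
        = h ^ m * w ^ S * (\<Prod>i\<in>{n+1..N}. F i)"
    proof -
      have "fermat_omega N z (- half_pow N 1 * y) (root_N N * x) (l - k)
          = (\<Prod>j\<in>{1..m}. (h * w ^ (N - j)) * F (N + 1 - j))"
        unfolding fermat_omega_def mdef w_def[symmetric] using m_def
        by (intro prod.cong refl G) auto
      also have "\<dots> = h ^ m * w ^ S * (\<Prod>j\<in>{1..m}. F (N + 1 - j))"
        by (simp add: prod.distrib S_def power_sum)
      also have "(\<Prod>j\<in>{1..m}. F (N + 1 - j)) = (\<Prod>i\<in>{n+1..N}. F i)"
        by (rule prod.reindex_bij_witness[where i = "\<lambda>i. N + 1 - i" and j = "\<lambda>j. N + 1 - j"])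
           (auto simp: m_def)
      finally show ?thesis .
    qed
    have split: "(\<Prod>i\<in>{1..n}. F i) * (\<Prod>i\<in>{n+1..N}. F i) = 1"
    proof -
      have "{1..N} = {1..n} \<union> {n+1..N}" using nlt by auto
      hence "(\<Prod>i\<in>{1..N}. F i) = (\<Prod>i\<in>{1..n}. F i) * (\<Prod>i\<in>{n+1..N}. F i)"
        by (simp add: prod.union_disjoint)
      thus ?thesis using full by simp
    qed
    have denz: "h ^ m * w ^ S * (\<Prod>i\<in>{n+1..N}. F i) \<noteq> 0"
      using w0 F0 by (simp add: h_def)
    define E1 where "E1 = (int P + 1) * int m + int S"
    define E2 where "E2 = k * l + (int P + 1) * (- (l ^ 2)) + (int P + 1) * (- (k ^ 2))"
    have S2: "2 * int S = 2 * int m * int N - int m * (int m + 1)"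
      unfolding S_def by (rule gauss2) (simp add: m_def)
    have mi: "int m = int N - int n" using nlt m_def by simp
    have "2 * (E1 - E2) = int N * (2 * int N - int n + 2 * int n * t + int N * t ^ 2 + k ^ 2 + l ^ 2)"
      unfolding E1_def E2_def using alg1[OF _ S2 mi kl, of "int P"] assms(1) by simp
    hence "int N dvd (E1 - E2)" using odd_dvd2[OF odd, of "E1 - E2"] by simp
    hence "E1 mod int N = E2 mod int N" by (simp add: mod_eq_dvd_iff)
    hence "w powi E1 = w powi E2" unfolding w_def by (rule powi_mod[OF N1])
    moreover have "w powi E1 = h ^ m * w ^ S"
    proof -
      have "E1 = int ((P + 1) * m) + int S" unfolding E1_def by (simp add: algebra_simps)
      hence "w powi E1 = w powi int ((P + 1) * m) * w powi int S"
        using power_int_add[of w "int ((P + 1) * m)" "int S"] w0 by simp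
      also have "\<dots> = h ^ m * w ^ S" unfolding h_def by (simp only: power_int_of_nat power_mult)
      finally show ?thesis .
    qed
    moreover have "w powi E2 = root_N N powi (k * l) * half_pow N (- (l ^ 2)) * half_pow N (- (k ^ 2))"
      unfolding E2_def hp w_def[symmetric] by (rule powi3[OF w0])
    ultimately have num: "root_N N powi (k * l) * half_pow N (- (l ^ 2)) * half_pow N (- (k ^ 2)) = h ^ m * w ^ S"
      by simp
    have X0: "h ^ m * w ^ S \<noteq> 0" using w0 by (simp add: h_def)
    have Q0: "(\<Prod>i\<in>{n+1..N}. F i) \<noteq> 0" using F0 by simp
    have r: "h ^ m * w ^ S / (h ^ m * w ^ S * (\<Prod>i\<in>{n+1..N}. F i)) = 1 / (\<Prod>i\<in>{n+1..N}. F i)"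
      using X0 Q0 by simp
    have "(\<Prod>i\<in>{1..n}. F i) = 1 / (\<Prod>i\<in>{n+1..N}. F i)"
      using split Q0 by (simp add: eq_divide_eq)
    thus ?thesis unfolding lhs den num r .
  qed
qed

end
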